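(* Let $(\Omega,\mu)$ be a $\sigma$-finite measure space and $E=L^2(\Omega,\mu)$. Let $A: E\supseteq D(A)\to E$ be a self-adjoint real operator with spectral bound $s(A)<\infty$ which is associated with a symmetric (closed) form $a: D(a)\times D(a)\to\mathbb{C}$ with form domain $D(a)\subseteq E$. If $0\le u\in E$ is strictly positive almost everywhere and $D(a)\subseteq E_u$, then $-u\otimes u\preceq R(\mu,A)\preceq u\otimes u$ for every real $\mu\in\rho(A)$.
   Context: A real operator maps real functions in its domain to real functions, with domain spanned by its real elements. $s(A)=\sup\{\operatorname{Re}\lambda:\lambda\in\sigma(A)\}$. $E_u=\{f\in E: |f|\le cu \text{ a.e. for some } c\ge0\}$. $u\otimes u$ is the operator $f\mapsto\big(\int_\Omega uf\,d\mu\big)u$. $R(\mu,A)=(\mu-A)^{-1}$. For bounded real operators, $T\succeq S$ (equivalently $S\preceq T$) means $T-cS$ maps nonnegative functions to nonnegative functions for some $c>0$. *)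

theory Defs
  imports "HOL-Analysis.Analysis"
begin

text \<open>Concrete model of the complex Hilbert space E = L^2(Omega, mu): square integrable
  measurable complex functions, with all identities understood almost everywhere.\<close>

definition L2 :: "'a measure \<Rightarrow> ('a \<Rightarrow> complex) set" where
  "L2 M = {f. f \<in> borel_measurable M \<and> integrable M (\<lambda>x. (cmod (f x))^2)}"

definition l2_inner :: "'a measure \<Rightarrow> ('a \<Rightarrow> complex) \<Rightarrow> ('a \<Rightarrow> complex) \<Rightarrow> complex" where
  "l2_inner M f g = (LINT x|M. f x * cnj (g x))"

definition l2_norm :: "'a measure \<Rightarrow> ('a \<Rightarrow> complex) \<Rightarrow> real" where
  "l2_norm M f = sqrt (LINT x|M. (cmod (f x))^2)"

definition ae_eq :: "'a measure \<Rightarrow> ('a \<Rightarrow> complex) \<Rightarrow> ('a \<Rightarrow> complex) \<Rightarrow> bool" where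
  "ae_eq M f g \<longleftrightarrow> (AE x in M. f x = g x)"

definition real_fun :: "'a measure \<Rightarrow> ('a \<Rightarrow> complex) \<Rightarrow> bool" where
  "real_fun M f \<longleftrightarrow> (AE x in M. Im (f x) = 0)"

definition nonneg_fun :: "'a measure \<Rightarrow> ('a \<Rightarrow> complex) \<Rightarrow> bool" where
  "nonneg_fun M f \<longleftrightarrow> (AE x in M. Im (f x) = 0 \<and> 0 \<le> Re (f x))"

definition linear_subspace_L2 :: "'a measure \<Rightarrow> ('a \<Rightarrow> complex) set \<Rightarrow> bool" where
  "linear_subspace_L2 M D \<longleftrightarrow> D \<subseteq> L2 M \<and> (\<lambda>x. 0) \<in> D \<and>
     (\<forall>f\<in>D. \<forall>g\<in>D. (\<lambda>x. f x + g x) \<in> D) \<and> (\<forall>c. \<forall>f\<in>D. (\<lambda>x. c * f x) \<in> D)"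

definition linear_operator :: "'a measure \<Rightarrow> ('a \<Rightarrow> complex) set \<Rightarrow> (('a \<Rightarrow> complex) \<Rightarrow> ('a \<Rightarrow> complex)) \<Rightarrow> bool" where
  "linear_operator M D A \<longleftrightarrow> linear_subspace_L2 M D \<and> (\<forall>f\<in>D. A f \<in> L2 M) \<and>
     (\<forall>f\<in>D. \<forall>g\<in>D. ae_eq M f g \<longrightarrow> ae_eq M (A f) (A g)) \<and>
     (\<forall>f\<in>D. \<forall>g\<in>D. ae_eq M (A (\<lambda>x. f x + g x)) (\<lambda>x. A f x + A g x)) \<and>
     (\<forall>c. \<forall>f\<in>D. ae_eq M (A (\<lambda>x. c * f x)) (\<lambda>x. c * A f x))"

definition dense_L2 :: "'a measure \<Rightarrow> ('a \<Rightarrow> complex) set \<Rightarrow> bool" where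
  "dense_L2 M D \<longleftrightarrow> (\<forall>f\<in>L2 M. \<forall>e>0. \<exists>g\<in>D. l2_norm M (\<lambda>x. f x - g x) < e)"

text \<open>Self-adjoint: densely defined and A equals its adjoint A* (graphs agree modulo a.e.).\<close>
definition self_adjoint :: "'a measure \<Rightarrow> ('a \<Rightarrow> complex) set \<Rightarrow> (('a \<Rightarrow> complex) \<Rightarrow> ('a \<Rightarrow> complex)) \<Rightarrow> bool" where
  "self_adjoint M D A \<longleftrightarrow> linear_operator M D A \<and> dense_L2 M D \<and>
     (\<forall>g\<in>L2 M. \<forall>h\<in>L2 M. (\<forall>f\<in>D. l2_inner M (A f) g = l2_inner M f h) \<longleftrightarrow>
        (\<exists>g'\<in>D. ae_eq M g' g \<and> ae_eq M (A g') h))"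

definition real_operator :: "'a measure \<Rightarrow> ('a \<Rightarrow> complex) set \<Rightarrow> (('a \<Rightarrow> complex) \<Rightarrow> ('a \<Rightarrow> complex)) \<Rightarrow> bool" where
  "real_operator M D A \<longleftrightarrow> (\<forall>f\<in>D. real_fun M f \<longrightarrow> real_fun M (A f)) \<and>
     (\<forall>f\<in>D. \<exists>g\<in>D. \<exists>h\<in>D. real_fun M g \<and> real_fun M h \<and> ae_eq M f (\<lambda>x. g x + \<i> * h x))"

definition resolvent_set :: "'a measure \<Rightarrow> ('a \<Rightarrow> complex) set \<Rightarrow> (('a \<Rightarrow> complex) \<Rightarrow> ('a \<Rightarrow> complex)) \<Rightarrow> complex set" where
  "resolvent_set M D A = {l. (\<forall>g\<in>L2 M. \<exists>f\<in>D. ae_eq M (\<lambda>x. l * f x - A f x) g) \<and>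
     (\<exists>C. \<forall>f\<in>D. l2_norm M f \<le> C * l2_norm M (\<lambda>x. l * f x - A f x))}"

definition spectrum_op :: "'a measure \<Rightarrow> ('a \<Rightarrow> complex) set \<Rightarrow> (('a \<Rightarrow> complex) \<Rightarrow> ('a \<Rightarrow> complex)) \<Rightarrow> complex set" where
  "spectrum_op M D A = - resolvent_set M D A"

text \<open>Spectral bound s(A) = sup Re sigma(A) in the extended reals (sup of the empty set is -infinity).\<close>
definition spectral_bound :: "'a measure \<Rightarrow> ('a \<Rightarrow> complex) set \<Rightarrow> (('a \<Rightarrow> complex) \<Rightarrow> ('a \<Rightarrow> complex)) \<Rightarrow> ereal" where
  "spectral_bound M D A = (SUP z\<in>spectrum_op M D A. ereal (Re z))"

definition resolvent :: "'a measure \<Rightarrow> ('a \<Rightarrow> complex) set \<Rightarrow> (('a \<Rightarrow> complex) \<Rightarrow> ('a \<Rightarrow> complex)) \<Rightarrow> complex \<Rightarrow> ('a \<Rightarrow> complex) \<Rightarrow> ('a \<Rightarrow> complex)" where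
  "resolvent M D A l f = (SOME g. g \<in> D \<and> ae_eq M (\<lambda>x. l * g x - A g x) f)"

definition sym_form :: "'a measure \<Rightarrow> ('a \<Rightarrow> complex) set \<Rightarrow> (('a \<Rightarrow> complex) \<Rightarrow> ('a \<Rightarrow> complex) \<Rightarrow> complex) \<Rightarrow> bool" where
  "sym_form M Da a \<longleftrightarrow> linear_subspace_L2 M Da \<and>
     (\<forall>f\<in>Da. \<forall>g\<in>Da. \<forall>h\<in>Da. a (\<lambda>x. f x + g x) h = a f h + a g h) \<and>
     (\<forall>c. \<forall>f\<in>Da. \<forall>h\<in>Da. a (\<lambda>x. c * f x) h = c * a f h) \<and>
     (\<forall>f\<in>Da. \<forall>h\<in>Da. a f h = cnj (a h f)) \<and>
     (\<forall>f\<in>Da. \<forall>g\<in>Da. \<forall>h\<in>Da. ae_eq M f g \<longrightarrow> a f h = a g h)"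

definition form_norm :: "'a measure \<Rightarrow> (('a \<Rightarrow> complex) \<Rightarrow> ('a \<Rightarrow> complex) \<Rightarrow> complex) \<Rightarrow> real \<Rightarrow> ('a \<Rightarrow> complex) \<Rightarrow> real" where
  "form_norm M a w f = sqrt (Re (a f f) + (w + 1) * (l2_norm M f)^2)"

definition closed_form :: "'a measure \<Rightarrow> ('a \<Rightarrow> complex) set \<Rightarrow> (('a \<Rightarrow> complex) \<Rightarrow> ('a \<Rightarrow> complex) \<Rightarrow> complex) \<Rightarrow> bool" where
  "closed_form M Da a \<longleftrightarrow> sym_form M Da a \<and>
     (\<exists>w. (\<forall>f\<in>Da. - w * (l2_norm M f)^2 \<le> Re (a f f)) \<and>
       (\<forall>F. (\<forall>n. F n \<in> Da) \<and> (\<forall>e>0. \<exists>N. \<forall>m\<ge>N. \<forall>n\<ge>N. form_norm M a w (\<lambda>x. F m x - F n x) < e)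
          \<longrightarrow> (\<exists>f\<in>Da. (\<lambda>n. form_norm M a w (\<lambda>x. F n x - f x)) \<longlonglongrightarrow> 0)))"

definition associated :: "'a measure \<Rightarrow> ('a \<Rightarrow> complex) set \<Rightarrow> (('a \<Rightarrow> complex) \<Rightarrow> ('a \<Rightarrow> complex)) \<Rightarrow>
    ('a \<Rightarrow> complex) set \<Rightarrow> (('a \<Rightarrow> complex) \<Rightarrow> ('a \<Rightarrow> complex) \<Rightarrow> complex) \<Rightarrow> bool" where
  "associated M D A Da a \<longleftrightarrow> (\<forall>f\<in>L2 M. \<forall>g\<in>L2 M.
     (\<exists>f'\<in>D. ae_eq M f' f \<and> ae_eq M (A f') g) \<longleftrightarrow>
     (\<exists>f'\<in>Da. ae_eq M f' f \<and> (\<forall>h\<in>Da. a f' h = - l2_inner M g h)))"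

definition principal_ideal :: "'a measure \<Rightarrow> ('a \<Rightarrow> real) \<Rightarrow> ('a \<Rightarrow> complex) set" where
  "principal_ideal M u = {f \<in> L2 M. \<exists>c\<ge>0. AE x in M. cmod (f x) \<le> c * u x}"

definition rank_one :: "'a measure \<Rightarrow> ('a \<Rightarrow> real) \<Rightarrow> ('a \<Rightarrow> complex) \<Rightarrow> ('a \<Rightarrow> complex)" where
  "rank_one M u f = (\<lambda>x. (LINT y|M. complex_of_real (u y) * f y) * complex_of_real (u x))"

definition op_dom_le :: "'a measure \<Rightarrow> (('a \<Rightarrow> complex) \<Rightarrow> ('a \<Rightarrow> complex)) \<Rightarrow> (('a \<Rightarrow> complex) \<Rightarrow> ('a \<Rightarrow> complex)) \<Rightarrow> bool" where
  "op_dom_le M S T \<longleftrightarrow> (\<exists>c>0. \<forall>f\<in>L2 M. nonneg_fun M f \<longrightarrow> nonneg_fun M (\<lambda>x. T f x - c * S f x))"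

end

theory Submission
  imports Defs
begin



lemma borel_measurable_cnj[measurable]:
  "f \<in> borel_measurable M \<Longrightarrow> (\<lambda>x. cnj (f x)) \<in> borel_measurable M"
  by (rule borel_measurable_continuous_on[of cnj], intro continuous_intros)

lemma sq_ineq1: "2 * ((a::real) * b) \<le> a^2 + b^2"
proof -
  have "a^2 + b^2 - 2 * (a * b) = (a - b)^2" by (simp add: power2_eq_square algebra_simps)
  moreover have "0 \<le> (a - b)^2" by simp
  ultimately show ?thesis by linarith
qed

lemma sq_ineq2: "((a::real) + b)^2 \<le> 2 * a^2 + 2 * b^2"
proof -
  have "2 * a^2 + 2 * b^2 - (a + b)^2 = (a - b)^2" by (simp add: power2_eq_square algebra_simps)
  moreover have "0 \<le> (a - b)^2" by simp
  ultimately show ?thesis by linarith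
qed

lemma L2_meas[measurable_dest]: "f \<in> L2 M \<Longrightarrow> f \<in> borel_measurable M"
  by (simp add: L2_def)

lemma L2_int: "f \<in> L2 M \<Longrightarrow> integrable M (\<lambda>x. (cmod (f x))^2)"
  by (simp add: L2_def)

lemma L2I: "f \<in> borel_measurable M \<Longrightarrow> integrable M (\<lambda>x. (cmod (f x))^2) \<Longrightarrow> f \<in> L2 M"
  by (simp add: L2_def)

lemma L2_prod_int_real:
  assumes "f \<in> L2 M" "g \<in> L2 M"
  shows "integrable M (\<lambda>x. cmod (f x) * cmod (g x))"
proof (rule Bochner_Integration.integrable_bound[where f="\<lambda>x. (cmod (f x))^2 + (cmod (g x))^2"])
  show "integrable M (\<lambda>x. (cmod (f x))^2 + (cmod (g x))^2)"
    using Bochner_Integration.integrable_add[OF L2_int[OF assms(1)] L2_int[OF assms(2)]] .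
  show "(\<lambda>x. cmod (f x) * cmod (g x)) \<in> borel_measurable M" using assms by measurable
  show "AE x in M. norm (cmod (f x) * cmod (g x)) \<le> norm ((cmod (f x))^2 + (cmod (g x))^2)"
  proof (rule AE_I2)
    fix x
    have "2 * (cmod (f x) * cmod (g x)) \<le> (cmod (f x))^2 + (cmod (g x))^2"
      by (rule sq_ineq1)
    moreover have "0 \<le> cmod (f x) * cmod (g x)" by simp
    moreover have "norm (cmod (f x) * cmod (g x)) = cmod (f x) * cmod (g x)" by simp
    moreover have "norm ((cmod (f x))^2 + (cmod (g x))^2) = (cmod (f x))^2 + (cmod (g x))^2" by simp
    ultimately show "norm (cmod (f x) * cmod (g x)) \<le> norm ((cmod (f x))^2 + (cmod (g x))^2)"
      by linarith
  qed
qed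

lemma L2_prod_int:
  assumes "f \<in> L2 M" "g \<in> L2 M"
  shows "integrable M (\<lambda>x. f x * cnj (g x))"
proof (rule Bochner_Integration.integrable_bound[OF L2_prod_int_real[OF assms]])
  show "(\<lambda>x. f x * cnj (g x)) \<in> borel_measurable M" using assms by measurable
qed (simp add: norm_mult)

lemma L2_prod_int': 
  assumes "f \<in> L2 M" "g \<in> L2 M"
  shows "integrable M (\<lambda>x. f x * g x)"
proof (rule Bochner_Integration.integrable_bound[OF L2_prod_int_real[OF assms]])
  show "(\<lambda>x. f x * g x) \<in> borel_measurable M" using assms by measurable
qed (simp add: norm_mult)

lemma L2_add:
  assumes "f \<in> L2 M" "g \<in> L2 M"
  shows "(\<lambda>x. f x + g x) \<in> L2 M"
proof (rule L2I)
  show "(\<lambda>x. f x + g x) \<in> borel_measurable M" using assms by measurable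
  show "integrable M (\<lambda>x. (cmod (f x + g x))^2)"
  proof (rule Bochner_Integration.integrable_bound[where f="\<lambda>x. 2 * (cmod (f x))^2 + 2 * (cmod (g x))^2"])
    show "integrable M (\<lambda>x. 2 * (cmod (f x))^2 + 2 * (cmod (g x))^2)"
      using Bochner_Integration.integrable_add[OF integrable_mult_right[OF L2_int[OF assms(1)]] integrable_mult_right[OF L2_int[OF assms(2)]]] .
    show "(\<lambda>x. (cmod (f x + g x))^2) \<in> borel_measurable M" using assms by measurable
    show "AE x in M. norm ((cmod (f x + g x))^2) \<le> norm (2 * (cmod (f x))^2 + 2 * (cmod (g x))^2)"
    proof (rule AE_I2)
      fix x
      have "cmod (f x + g x) \<le> cmod (f x) + cmod (g x)" by (rule norm_triangle_ineq)
      hence "(cmod (f x + g x))^2 \<le> (cmod (f x) + cmod (g x))^2"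
        by (simp add: power_mono)
      also have "\<dots> \<le> 2 * (cmod (f x))^2 + 2 * (cmod (g x))^2"
        by (rule sq_ineq2)
      finally show "norm ((cmod (f x + g x))^2) \<le> norm (2 * (cmod (f x))^2 + 2 * (cmod (g x))^2)"
        by simp
    qed
  qed
qed

lemma L2_scale:
  assumes "f \<in> L2 M"
  shows "(\<lambda>x. c * f x) \<in> L2 M"
proof (rule L2I)
  show "(\<lambda>x. c * f x) \<in> borel_measurable M" using assms by measurable
  have "integrable M (\<lambda>x. (cmod c)^2 * (cmod (f x))^2)" using assms L2_int by (intro integrable_mult_right)
  then show "integrable M (\<lambda>x. (cmod (c * f x))^2)"
    by (simp add: norm_mult power_mult_distrib)
qed

lemma L2_diff:
  assumes "f \<in> L2 M" "g \<in> L2 M"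
  shows "(\<lambda>x. f x - g x) \<in> L2 M"
proof -
  have "(\<lambda>x. f x + (-1) * g x) \<in> L2 M" using L2_add[OF assms(1) L2_scale[OF assms(2)]] .
  then show ?thesis by simp
qed

lemma L2_zero: "(\<lambda>x. 0) \<in> L2 M"
  by (rule L2I) auto

lemma L2_abs: "f \<in> L2 M \<Longrightarrow> (\<lambda>x. complex_of_real (cmod (f x))) \<in> L2 M"
  by (rule L2I) (auto simp: L2_int)

lemma l2_inner_add_left:
  assumes "f \<in> L2 M" "g \<in> L2 M" "h \<in> L2 M"
  shows "l2_inner M (\<lambda>x. f x + g x) h = l2_inner M f h + l2_inner M g h"
  unfolding l2_inner_def using L2_prod_int[OF assms(1,3)] L2_prod_int[OF assms(2,3)]
  by (simp add: distrib_right)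

lemma l2_inner_scale_left:
  shows "l2_inner M (\<lambda>x. c * f x) h = c * l2_inner M f h"
  unfolding l2_inner_def by (simp add: mult.assoc)

lemma l2_inner_cnj: "l2_inner M g f = cnj (l2_inner M f g)"
proof -
  have "cnj (l2_inner M f g) = (LINT x|M. cnj (f x * cnj (g x)))"
    unfolding l2_inner_def by (rule Bochner_Integration.integral_cnj[symmetric])
  then show ?thesis unfolding l2_inner_def by (simp add: mult.commute)
qed

lemma l2_inner_self: "l2_inner M f f = complex_of_real ((l2_norm M f)^2)"
proof -
  have "l2_inner M f f = (LINT x|M. complex_of_real ((cmod (f x))^2))"
    unfolding l2_inner_def by (simp add: complex_norm_square[symmetric])
  also have "\<dots> = complex_of_real (LINT x|M. (cmod (f x))^2)" by (rule integral_complex_of_real)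
  also have "(LINT x|M. (cmod (f x))^2) = (l2_norm M f)^2"
    unfolding l2_norm_def by simp
  finally show ?thesis .
qed

lemma l2_norm_nonneg: "0 \<le> l2_norm M f"
  unfolding l2_norm_def by simp

lemma l2_norm_sq: "(l2_norm M f)^2 = (LINT x|M. (cmod (f x))^2)"
  unfolding l2_norm_def by simp

lemma l2_norm_ae:
  assumes "f \<in> L2 M" "g \<in> L2 M" "ae_eq M f g"
  shows "l2_norm M f = l2_norm M g"
proof -
  have "(LINT x|M. (cmod (f x))^2) = (LINT x|M. (cmod (g x))^2)"
    using assms unfolding ae_eq_def by (intro integral_cong_AE) (auto elim: eventually_mono)
  then show ?thesis unfolding l2_norm_def by simp
qed




lemma quad_disc:
  fixes P Q c :: real
  assumes "\<And>r. 0 \<le> P - 2 * r * c + r^2 * c * Q" "0 \<le> c" "0 \<le> P" "0 \<le> Q"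
  shows "c \<le> P * Q"
proof (cases "Q = 0")
  case True
  show ?thesis
  proof (rule ccontr)
    assume "\<not> c \<le> P * Q"
    hence "c > 0" using True by simp
    have "0 \<le> P - 2 * ((P + 1) / (2 * c)) * c" using assms(1)[of "(P + 1) / (2 * c)"] True by simp
    also have "2 * ((P + 1) / (2 * c)) * c = P + 1" using \<open>c > 0\<close> by (simp add: field_simps)
    finally show False by simp
  qed
next
  case False
  hence "Q > 0" using assms by simp
  have "0 \<le> P - 2 * (1/Q) * c + (1/Q)^2 * c * Q" using assms(1) .
  also have "(1/Q)^2 * c * Q = c / Q" using \<open>Q > 0\<close> by (simp add: power2_eq_square field_simps)
  also have "2 * (1/Q) * c = 2 * (c / Q)" by simp
  finally have "c / Q \<le> P" by simp
  then show ?thesis using \<open>Q > 0\<close> by (simp add: field_simps mult.commute)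
qed

lemma cs_gen:
  fixes V :: "('a \<Rightarrow> complex) set" and B :: "('a \<Rightarrow> complex) \<Rightarrow> ('a \<Rightarrow> complex) \<Rightarrow> complex"
  assumes cl: "\<And>f g c. f \<in> V \<Longrightarrow> g \<in> V \<Longrightarrow> (\<lambda>x. f x + c * g x) \<in> V"
    and add: "\<And>f g h. f \<in> V \<Longrightarrow> g \<in> V \<Longrightarrow> h \<in> V \<Longrightarrow> B (\<lambda>x. f x + g x) h = B f h + B g h"
    and scale: "\<And>c f h. f \<in> V \<Longrightarrow> h \<in> V \<Longrightarrow> B (\<lambda>x. c * f x) h = c * B f h"
    and herm: "\<And>f h. f \<in> V \<Longrightarrow> h \<in> V \<Longrightarrow> B f h = cnj (B h f)"
    and pos: "\<And>f. f \<in> V \<Longrightarrow> 0 \<le> Re (B f f)"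
    and fg: "f \<in> V" "g \<in> V"
  shows "(cmod (B f g))^2 \<le> Re (B f f) * Re (B g g)"
proof -
  have addc: "B (\<lambda>x. f' x + c * g' x) h = B f' h + c * B g' h"
    if "f' \<in> V" "g' \<in> V" "h \<in> V" for f' g' h c
  proof -
    have "(\<lambda>x. g' x + (c - 1) * g' x) \<in> V" by (rule cl[OF that(2) that(2)])
    moreover have "(\<lambda>x. g' x + (c - 1) * g' x) = (\<lambda>x. c * g' x)" by (simp add: algebra_simps)
    ultimately have "(\<lambda>x. c * g' x) \<in> V" by simp
    then show ?thesis using add[OF that(1) _ that(3)] scale[OF that(2,3)] by simp
  qed
  have addc_r: "B h (\<lambda>x. f' x + c * g' x) = B h f' + cnj c * B h g'"
    if "f' \<in> V" "g' \<in> V" "h \<in> V" for f' g' h c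
  proof -
    have "B h (\<lambda>x. f' x + c * g' x) = cnj (B (\<lambda>x. f' x + c * g' x) h)"
      using herm[OF that(3) cl[OF that(1,2)]] .
    also have "\<dots> = cnj (B f' h) + cnj c * cnj (B g' h)" using addc[OF that] by simp
    also have "\<dots> = B h f' + cnj c * B h g'" using herm[OF that(3) that(1)] herm[OF that(3) that(2)] by simp
    finally show ?thesis .
  qed
  define \<beta> where "\<beta> = B f g"
  define c where "c = (cmod \<beta>)^2"
  define P where "P = Re (B f f)"
  define Q where "Q = Re (B g g)"
  have "0 \<le> P - 2 * r * c + r^2 * c * Q" for r :: real
  proof -
    define t where "t = - (complex_of_real r * \<beta>)"
    define h where "h = (\<lambda>x. f x + t * g x)"
    have hV: "h \<in> V" unfolding h_def using cl fg by blast
    have "B h h = B f h + t * B g h" unfolding h_def[of] using addc[OF fg hV] by (simp add: h_def)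
    also have "B f h = B f f + cnj t * B f g" unfolding h_def using addc_r[OF fg(1) fg(2) fg(1)] by simp
    also have "B g h = B g f + cnj t * B g g" unfolding h_def using addc_r[OF fg(1) fg(2) fg(2)] by simp
    also have "B g f = cnj \<beta>" unfolding \<beta>_def using herm[OF fg(2) fg(1)] by simp
    finally have e: "B h h = B f f + cnj t * \<beta> + t * (cnj \<beta> + cnj t * B g g)" by (simp add: \<beta>_def)
    have nb: "\<beta> * cnj \<beta> = complex_of_real c" unfolding c_def using complex_norm_square[of \<beta>] by simp
    have 1: "cnj t * \<beta> = - complex_of_real (r * c)"
      unfolding t_def using nb by (simp add: mult_ac)
    have 2: "t * cnj \<beta> = - complex_of_real (r * c)"
      unfolding t_def using nb by (simp add: mult_ac)
    have 3: "t * cnj t = complex_of_real (r^2 * c)"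
      unfolding t_def using nb by (simp add: mult_ac power2_eq_square)
    have "B h h = B f f + cnj t * \<beta> + t * cnj \<beta> + (t * cnj t) * B g g" unfolding e by (simp add: algebra_simps)
    also have "\<dots> = B f f - 2 * complex_of_real (r * c) + complex_of_real (r^2 * c) * B g g"
      unfolding 1 2 3 by simp
    finally have "B h h = B f f - 2 * complex_of_real (r * c) + complex_of_real (r^2 * c) * B g g" .
    hence "Re (B h h) = P - 2 * r * c + r^2 * c * Q"
      unfolding P_def Q_def by simp
    then show ?thesis using pos[OF hV] by simp
  qed
  moreover have "0 \<le> c" unfolding c_def by simp
  moreover have "0 \<le> P" "0 \<le> Q" unfolding P_def Q_def using pos fg by auto
  ultimately have "c \<le> P * Q" by (rule quad_disc)
  then show ?thesis unfolding c_def \<beta>_def P_def Q_def .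
qed

lemma quad_bound:
  fixes x \<alpha> \<beta> :: real
  assumes "0 \<le> x" "0 \<le> \<alpha>" "0 \<le> \<beta>" "x^2 \<le> \<alpha> * x + \<beta>^2"
  shows "x \<le> \<alpha> + \<beta>"
proof (rule ccontr)
  assume "\<not> x \<le> \<alpha> + \<beta>"
  hence lt: "\<alpha> + \<beta> < x" by simp
  have "\<alpha> * x + \<beta>^2 \<le> \<alpha> * x + \<beta> * x"
    using lt assms by (simp add: power2_eq_square mult_left_mono)
  also have "\<dots> = (\<alpha> + \<beta>) * x" by (simp add: algebra_simps)
  also have "\<dots> < x * x" using lt assms by (simp add: mult_strict_right_mono)
  finally show False using assms(4) by (simp add: power2_eq_square)
qed




lemma Re_of_real_mult: "Re (complex_of_real r * z) = r * Re z" by simp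

lemma ae_eq_refl: "ae_eq M f f" unfolding ae_eq_def by simp
lemma ae_eq_sym: "ae_eq M f g \<Longrightarrow> ae_eq M g f" unfolding ae_eq_def by (auto elim: eventually_mono)
lemma ae_eq_trans: "ae_eq M f g \<Longrightarrow> ae_eq M g h \<Longrightarrow> ae_eq M f h"
  unfolding ae_eq_def by (auto elim: eventually_elim2)

lemma l2_norm_zero_ae:
  assumes "f \<in> L2 M" "l2_norm M f = 0"
  shows "AE x in M. f x = 0"
proof -
  have "(LINT x|M. (cmod (f x))^2) = 0" using assms(2) l2_norm_sq[of M f] by simp
  hence "AE x in M. (cmod (f x))^2 = 0"
    using integral_nonneg_eq_0_iff_AE[OF L2_int[OF assms(1)]] by simp
  then show ?thesis by (auto elim: eventually_mono)
qed

lemma l2_norm_ae_zero: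
  assumes "f \<in> L2 M" "AE x in M. f x = 0"
  shows "l2_norm M f = 0"
proof -
  have "l2_norm M f = l2_norm M (\<lambda>x. 0)"
    using assms L2_zero by (intro l2_norm_ae) (auto simp: ae_eq_def)
  then show ?thesis unfolding l2_norm_def by simp
qed

lemma l2_inner_ae_left:
  assumes "f \<in> L2 M" "g \<in> L2 M" "h \<in> L2 M" "ae_eq M f g"
  shows "l2_inner M f h = l2_inner M g h"
  unfolding l2_inner_def using assms unfolding ae_eq_def
  by (intro integral_cong_AE) (auto elim: eventually_mono)

lemma l2_inner_ae_right:
  assumes "f \<in> L2 M" "g \<in> L2 M" "h \<in> L2 M" "ae_eq M f g"
  shows "l2_inner M h f = l2_inner M h g"
  unfolding l2_inner_def using assms unfolding ae_eq_def
  by (intro integral_cong_AE) (auto elim: eventually_mono)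

lemma l2_norm_scale: "l2_norm M (\<lambda>x. c * f x) = cmod c * l2_norm M f"
proof -
  have "(LINT x|M. (cmod (c * f x))^2) = (cmod c)^2 * (LINT x|M. (cmod (f x))^2)"
    by (simp add: norm_mult power_mult_distrib)
  then show ?thesis unfolding l2_norm_def by (simp add: real_sqrt_mult)
qed

locale prop43 =
  fixes M :: "'a measure" and D Da :: "('a \<Rightarrow> complex) set"
    and A :: "('a \<Rightarrow> complex) \<Rightarrow> ('a \<Rightarrow> complex)"
    and a :: "('a \<Rightarrow> complex) \<Rightarrow> ('a \<Rightarrow> complex) \<Rightarrow> complex"
    and u :: "'a \<Rightarrow> real" and mu :: real
  assumes sa: "self_adjoint M D A"
    and ro: "real_operator M D A"
    and cf: "closed_form M Da a"
    and asc: "associated M D A Da a"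
    and uL2: "(\<lambda>x. complex_of_real (u x)) \<in> L2 M"
    and upos: "AE x in M. 0 < u x"
    and DaE: "Da \<subseteq> principal_ideal M u"
    and mures: "complex_of_real mu \<in> resolvent_set M D A"
begin

lemma lo: "linear_operator M D A" using sa unfolding self_adjoint_def by simp
lemma Dsub: "linear_subspace_L2 M D" using lo unfolding linear_operator_def by simp
lemma D_L2: "f \<in> D \<Longrightarrow> f \<in> L2 M" using Dsub unfolding linear_subspace_L2_def by auto
lemma A_L2: "f \<in> D \<Longrightarrow> A f \<in> L2 M" using lo unfolding linear_operator_def by auto
lemma D_add: "f \<in> D \<Longrightarrow> g \<in> D \<Longrightarrow> (\<lambda>x. f x + g x) \<in> D" using Dsub unfolding linear_subspace_L2_def by auto
lemma D_scale: "f \<in> D \<Longrightarrow> (\<lambda>x. c * f x) \<in> D" using Dsub unfolding linear_subspace_L2_def by auto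
lemma A_ae: "f \<in> D \<Longrightarrow> g \<in> D \<Longrightarrow> ae_eq M f g \<Longrightarrow> ae_eq M (A f) (A g)"
  using lo unfolding linear_operator_def by auto
lemma A_add: "f \<in> D \<Longrightarrow> g \<in> D \<Longrightarrow> ae_eq M (A (\<lambda>x. f x + g x)) (\<lambda>x. A f x + A g x)"
  using lo unfolding linear_operator_def by auto
lemma A_scale: "f \<in> D \<Longrightarrow> ae_eq M (A (\<lambda>x. c * f x)) (\<lambda>x. c * A f x)"
  using lo unfolding linear_operator_def by auto

lemma sf: "sym_form M Da a" using cf unfolding closed_form_def by simp
lemma Dasub: "linear_subspace_L2 M Da" using sf unfolding sym_form_def by simp
lemma Da_L2: "f \<in> Da \<Longrightarrow> f \<in> L2 M" using Dasub unfolding linear_subspace_L2_def by auto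
lemma Da_zero: "(\<lambda>x. 0) \<in> Da" using Dasub unfolding linear_subspace_L2_def by auto
lemma Da_add: "f \<in> Da \<Longrightarrow> g \<in> Da \<Longrightarrow> (\<lambda>x. f x + g x) \<in> Da" using Dasub unfolding linear_subspace_L2_def by auto
lemma Da_scale: "f \<in> Da \<Longrightarrow> (\<lambda>x. c * f x) \<in> Da" using Dasub unfolding linear_subspace_L2_def by auto
lemma Da_lin: "f \<in> Da \<Longrightarrow> g \<in> Da \<Longrightarrow> (\<lambda>x. f x + c * g x) \<in> Da"
  using Da_add Da_scale by blast
lemma Da_diff: "f \<in> Da \<Longrightarrow> g \<in> Da \<Longrightarrow> (\<lambda>x. f x - g x) \<in> Da"
  using Da_lin[of f g "-1"] by simp
lemma a_add: "f \<in> Da \<Longrightarrow> g \<in> Da \<Longrightarrow> h \<in> Da \<Longrightarrow> a (\<lambda>x. f x + g x) h = a f h + a g h"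
  using sf unfolding sym_form_def by blast
lemma a_scale: "f \<in> Da \<Longrightarrow> h \<in> Da \<Longrightarrow> a (\<lambda>x. c * f x) h = c * a f h"
  using sf unfolding sym_form_def by blast
lemma a_herm: "f \<in> Da \<Longrightarrow> h \<in> Da \<Longrightarrow> a f h = cnj (a h f)"
  using sf unfolding sym_form_def by blast
lemma a_ae: "f \<in> Da \<Longrightarrow> g \<in> Da \<Longrightarrow> h \<in> Da \<Longrightarrow> ae_eq M f g \<Longrightarrow> a f h = a g h"
  using sf unfolding sym_form_def by blast
lemma a_ae_right: "f \<in> Da \<Longrightarrow> g \<in> Da \<Longrightarrow> h \<in> Da \<Longrightarrow> ae_eq M f g \<Longrightarrow> a h f = a h g"
  using a_ae[of f g h] a_herm[of h f] a_herm[of h g] by simp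

definition "w0 = (SOME w. (\<forall>f\<in>Da. - w * (l2_norm M f)^2 \<le> Re (a f f)) \<and>
       (\<forall>F. (\<forall>n. F n \<in> Da) \<and> (\<forall>e>0. \<exists>N. \<forall>m\<ge>N. \<forall>n\<ge>N. form_norm M a w (\<lambda>x. F m x - F n x) < e)
          \<longrightarrow> (\<exists>f\<in>Da. (\<lambda>n. form_norm M a w (\<lambda>x. F n x - f x)) \<longlonglongrightarrow> 0)))"

lemma w0: "(\<forall>f\<in>Da. - w0 * (l2_norm M f)^2 \<le> Re (a f f)) \<and>
       (\<forall>F. (\<forall>n. F n \<in> Da) \<and> (\<forall>e>0. \<exists>N. \<forall>m\<ge>N. \<forall>n\<ge>N. form_norm M a w0 (\<lambda>x. F m x - F n x) < e)
          \<longrightarrow> (\<exists>f\<in>Da. (\<lambda>n. form_norm M a w0 (\<lambda>x. F n x - f x)) \<longlonglongrightarrow> 0))"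
  unfolding w0_def using cf unfolding closed_form_def by (rule someI_ex[OF conjunct2])

lemma w0_lower: "f \<in> Da \<Longrightarrow> - w0 * (l2_norm M f)^2 \<le> Re (a f f)"
  using w0 by blast

lemma w0_complete: "(\<forall>n. F n \<in> Da) \<Longrightarrow> (\<forall>e>0. \<exists>N. \<forall>m\<ge>N. \<forall>n\<ge>N. form_norm M a w0 (\<lambda>x. F m x - F n x) < e)
          \<Longrightarrow> (\<exists>f\<in>Da. (\<lambda>n. form_norm M a w0 (\<lambda>x. F n x - f x)) \<longlonglongrightarrow> 0)"
  using w0 by blast

abbreviation "fn \<equiv> form_norm M a w0"

definition "B f g = a f g + complex_of_real (w0 + 1) * l2_inner M f g"

lemma B_add:
  assumes "f \<in> Da" "g \<in> Da" "h \<in> Da"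
  shows "B (\<lambda>x. f x + g x) h = B f h + B g h"
  unfolding B_def a_add[OF assms] l2_inner_add_left[OF Da_L2[OF assms(1)] Da_L2[OF assms(2)] Da_L2[OF assms(3)]]
  by (simp add: algebra_simps)

lemma B_scale:
  assumes "f \<in> Da" "h \<in> Da"
  shows "B (\<lambda>x. c * f x) h = c * B f h"
  unfolding B_def a_scale[OF assms] l2_inner_scale_left
  by (simp add: algebra_simps)

lemma B_herm: "f \<in> Da \<Longrightarrow> h \<in> Da \<Longrightarrow> B f h = cnj (B h f)"
  unfolding B_def using a_herm[of f h] l2_inner_cnj[of M f h] by simp

lemma ReB: "Re (B f f) = Re (a f f) + (w0 + 1) * (l2_norm M f)^2"
  unfolding B_def using l2_inner_self[of M f] by simp

lemma B_ge: "f \<in> Da \<Longrightarrow> (l2_norm M f)^2 \<le> Re (B f f)"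
  using w0_lower[of f] unfolding ReB by (simp add: algebra_simps)

lemma B_pos:
  assumes "f \<in> Da"
  shows "0 \<le> Re (B f f)"
proof -
  have "(l2_norm M f)^2 \<le> Re (B f f)" by (rule B_ge[OF assms])
  moreover have "0 \<le> (l2_norm M f)^2" by simp
  ultimately show ?thesis by linarith
qed

lemma fn_B: "fn f = sqrt (Re (B f f))"
  unfolding form_norm_def ReB ..

lemma fn_nonneg: "f \<in> Da \<Longrightarrow> 0 \<le> fn f" unfolding fn_B using B_pos by simp

lemma fn_ge: "f \<in> Da \<Longrightarrow> l2_norm M f \<le> fn f"
  unfolding fn_B by (rule real_le_rsqrt, rule B_ge)

lemma B_cs:
  assumes "f \<in> Da" "g \<in> Da"
  shows "(cmod (B f g))^2 \<le> Re (B f f) * Re (B g g)"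
proof (rule cs_gen[where V=Da and B=B])
  show "\<And>f g c. f \<in> Da \<Longrightarrow> g \<in> Da \<Longrightarrow> (\<lambda>x. f x + c * g x) \<in> Da" by (rule Da_lin)
  show "\<And>f g h. f \<in> Da \<Longrightarrow> g \<in> Da \<Longrightarrow> h \<in> Da \<Longrightarrow> B (\<lambda>x. f x + g x) h = B f h + B g h" by (rule B_add)
  show "\<And>c f h. f \<in> Da \<Longrightarrow> h \<in> Da \<Longrightarrow> B (\<lambda>x. c * f x) h = c * B f h" by (rule B_scale)
  show "\<And>f h. f \<in> Da \<Longrightarrow> h \<in> Da \<Longrightarrow> B f h = cnj (B h f)" by (rule B_herm)
  show "\<And>f. f \<in> Da \<Longrightarrow> 0 \<le> Re (B f f)" by (rule B_pos)
qed (fact assms)+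

lemma fn_triangle:
  assumes "f \<in> Da" "g \<in> Da"
  shows "fn (\<lambda>x. f x + g x) \<le> fn f + fn g"
proof -
  let ?h = "\<lambda>x. f x + g x"
  have hD: "?h \<in> Da" using Da_add assms by blast
  have r: "B k ?h = B k f + B k g" if "k \<in> Da" for k
  proof -
    have "B k ?h = cnj (B ?h k)" using B_herm[OF that hD] .
    also have "\<dots> = cnj (B f k) + cnj (B g k)" using B_add[OF assms that] by simp
    also have "\<dots> = B k f + B k g" using B_herm[OF that assms(1)] B_herm[OF that assms(2)] by simp
    finally show ?thesis .
  qed
  have "B ?h ?h = B f f + B f g + (B g f + B g g)"
    using B_add[OF assms hD] r[OF assms(1)] r[OF assms(2)] by simp
  hence "Re (B ?h ?h) = Re (B f f) + Re (B g g) + 2 * Re (B f g)"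
    using B_herm[OF assms(2) assms(1)] by simp
  also have "Re (B f g) \<le> cmod (B f g)" by (rule complex_Re_le_cmod)
  also have "cmod (B f g) \<le> sqrt (Re (B f f)) * sqrt (Re (B g g))"
    using B_cs[OF assms] by (simp add: real_le_rsqrt real_sqrt_mult[symmetric])
  finally have "Re (B ?h ?h) \<le> (sqrt (Re (B f f)) + sqrt (Re (B g g)))^2"
    using B_pos[OF assms(1)] B_pos[OF assms(2)] by (simp add: power2_sum)
  hence "sqrt (Re (B ?h ?h)) \<le> sqrt (Re (B f f)) + sqrt (Re (B g g))"
    by (rule real_le_lsqrt[rotated]) (simp_all add: B_pos assms)
  then show ?thesis unfolding fn_B .
qed

lemma fn_scale:
  assumes "f \<in> Da"
  shows "fn (\<lambda>x. c * f x) = cmod c * fn f"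
proof -
  have cD: "(\<lambda>x. c * f x) \<in> Da" using Da_scale assms by blast
  have "B (\<lambda>x. c * f x) (\<lambda>x. c * f x) = c * B f (\<lambda>x. c * f x)" using B_scale[OF assms cD] .
  also have "B f (\<lambda>x. c * f x) = cnj (B (\<lambda>x. c * f x) f)" using B_herm[OF assms cD] .
  also have "B (\<lambda>x. c * f x) f = c * B f f" using B_scale[OF assms assms] .
  finally have e: "B (\<lambda>x. c * f x) (\<lambda>x. c * f x) = c * cnj (c * B f f)" .
  have cc: "c * cnj c = complex_of_real ((cmod c)^2)" using complex_norm_square[of c] by simp
  have "c * cnj (c * B f f) = (c * cnj c) * cnj (B f f)" by (simp add: mult_ac)
  also have "\<dots> = complex_of_real ((cmod c)^2) * cnj (B f f)" unfolding cc ..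
  finally have q: "c * cnj (c * B f f) = complex_of_real ((cmod c)^2) * cnj (B f f)" .
  have "Re (B (\<lambda>x. c * f x) (\<lambda>x. c * f x)) = Re (complex_of_real ((cmod c)^2) * cnj (B f f))"
    unfolding e q by (rule refl)
  also have "\<dots> = (cmod c)^2 * Re (B f f)" by (simp only: Re_of_real_mult) simp
  finally have "Re (B (\<lambda>x. c * f x) (\<lambda>x. c * f x)) = (cmod c)^2 * Re (B f f)" .
  then show ?thesis unfolding fn_B by (simp add: real_sqrt_mult)
qed

lemma fn_ae:
  assumes "f \<in> Da" "g \<in> Da" "ae_eq M f g"
  shows "fn f = fn g"
proof -
  have "a f f = a g f" using a_ae[OF assms(1,2,1) assms(3)] .
  also have "\<dots> = a g g" using a_ae_right[OF assms(1,2,2) assms(3)] .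
  finally have "a f f = a g g" .
  moreover have "l2_norm M f = l2_norm M g" using l2_norm_ae Da_L2 assms by blast
  ultimately show ?thesis unfolding form_norm_def by simp
qed

lemma fn_zero_ae:
  assumes "f \<in> Da" "fn f = 0"
  shows "AE x in M. f x = 0"
proof -
  have "l2_norm M f = 0" using fn_ge[OF assms(1)] assms(2) l2_norm_nonneg[of M f] by simp
  then show ?thesis using l2_norm_zero_ae Da_L2 assms(1) by blast
qed

lemma fn_zero: "fn (\<lambda>x. 0) = 0"
proof -
  have "fn (\<lambda>x. 0 * 0) = cmod 0 * fn (\<lambda>x. 0)" using fn_scale[OF Da_zero, of 0] by simp
  then show ?thesis by simp
qed

lemma fn_swap:
  assumes "f \<in> Da" "g \<in> Da"
  shows "fn (\<lambda>x. f x - g x) = fn (\<lambda>x. g x - f x)"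
proof -
  have "fn (\<lambda>x. (-1) * (g x - f x)) = cmod (-1) * fn (\<lambda>x. g x - f x)"
    using fn_scale[OF Da_diff[OF assms(2,1)]] .
  then show ?thesis by simp
qed

end



context prop43 begin

definition "rep f = (SOME g. g \<in> Da \<and> ae_eq M g f)"

lemma rep: "f \<in> Da \<Longrightarrow> rep f \<in> Da \<and> ae_eq M (rep f) f"
  unfolding rep_def by (rule someI[of _ f]) (simp add: ae_eq_refl)

lemma rep_eq:
  assumes "ae_eq M f g"
  shows "rep f = rep g"
proof -
  have "(\<lambda>h. h \<in> Da \<and> ae_eq M h f) = (\<lambda>h. h \<in> Da \<and> ae_eq M h g)"
    using assms ae_eq_trans ae_eq_sym by blast
  then show ?thesis unfolding rep_def by simp
qed

definition "Car = rep ` Da"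

lemma Car_Da: "x \<in> Car \<Longrightarrow> x \<in> Da" unfolding Car_def using rep by auto

lemma Car_eq:
  assumes "x \<in> Car" "y \<in> Car" "ae_eq M x y"
  shows "x = y"
proof -
  obtain f g where f: "f \<in> Da" "x = rep f" and g: "g \<in> Da" "y = rep g"
    using assms unfolding Car_def by auto
  have "ae_eq M f g"
  proof -
    have "ae_eq M x f" using rep[OF f(1)] f(2) by simp
    hence "ae_eq M f x" by (rule ae_eq_sym)
    hence "ae_eq M f y" using assms(3) by (rule ae_eq_trans)
    moreover have "ae_eq M y g" using rep[OF g(1)] g(2) by simp
    ultimately show ?thesis by (rule ae_eq_trans)
  qed
  then show ?thesis using f g rep_eq by simp
qed

definition "dd x y = (if x \<in> Da \<and> y \<in> Da then fn (\<lambda>t. x t - y t) else 0)"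

lemma ms: "Metric_space Car dd"
proof
  fix x y z
  show "0 \<le> dd x y" unfolding dd_def using fn_nonneg Da_diff by auto
  show "dd x y = dd y x" unfolding dd_def using fn_swap by auto
  assume xyz: "x \<in> Car" "y \<in> Car"
  hence D: "x \<in> Da" "y \<in> Da" using Car_Da by auto
  show "dd x y = 0 \<longleftrightarrow> x = y"
  proof
    assume "dd x y = 0"
    hence "fn (\<lambda>t. x t - y t) = 0" using D unfolding dd_def by simp
    hence "AE t in M. x t - y t = 0" using fn_zero_ae Da_diff[OF D] by blast
    hence "ae_eq M x y" unfolding ae_eq_def by (auto elim: eventually_mono)
    then show "x = y" using Car_eq xyz by blast
  next
    assume "x = y"
    then show "dd x y = 0" using D fn_zero unfolding dd_def by simp
  qed
  assume "z \<in> Car"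
  hence Dz: "z \<in> Da" using Car_Da by auto
  have "fn (\<lambda>t. (x t - y t) + (y t - z t)) \<le> fn (\<lambda>t. x t - y t) + fn (\<lambda>t. y t - z t)"
    using fn_triangle Da_diff D Dz by blast
  then show "dd x z \<le> dd x y + dd y z" unfolding dd_def using D Dz by simp
qed

lemma Car_mcomplete: "Metric_space.mcomplete Car dd"
proof -
  interpret Metric_space Car dd by (rule ms)
  show ?thesis unfolding mcomplete_def
  proof (intro allI impI)
    fix \<sigma> assume "MCauchy \<sigma>"
    hence rs: "range \<sigma> \<subseteq> Car" and cau: "\<forall>\<epsilon>>0. \<exists>N. \<forall>n n'. N \<le> n \<longrightarrow> N \<le> n' \<longrightarrow> dd (\<sigma> n) (\<sigma> n') < \<epsilon>"
      unfolding MCauchy_def by auto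
    have sD: "\<sigma> n \<in> Da" for n using rs Car_Da by auto
    have "\<forall>e>0. \<exists>N. \<forall>m\<ge>N. \<forall>n\<ge>N. fn (\<lambda>x. \<sigma> m x - \<sigma> n x) < e"
      using cau sD unfolding dd_def by simp
    then obtain f where f: "f \<in> Da" "(\<lambda>n. fn (\<lambda>x. \<sigma> n x - f x)) \<longlonglongrightarrow> 0"
      using w0_complete[of \<sigma>] sD by blast
    have rf: "rep f \<in> Car" unfolding Car_def using f by auto
    have eqn: "dd (\<sigma> n) (rep f) = fn (\<lambda>x. \<sigma> n x - f x)" for n
    proof -
      have "ae_eq M (\<lambda>x. \<sigma> n x - rep f x) (\<lambda>x. \<sigma> n x - f x)"
        using rep[OF f(1)] unfolding ae_eq_def by (auto elim: eventually_mono)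
      then show ?thesis unfolding dd_def using fn_ae Da_diff sD rep[OF f(1)] f(1) by simp
    qed
    have "limitin mtopology \<sigma> (rep f) sequentially"
      unfolding limitin_metric
    proof (intro conjI allI impI)
      show "rep f \<in> Car" by (rule rf)
      fix \<epsilon> :: real assume "\<epsilon> > 0"
      then have "eventually (\<lambda>n. fn (\<lambda>x. \<sigma> n x - f x) < \<epsilon>) sequentially"
        using order_tendstoD(2)[OF f(2)] by simp
      then show "eventually (\<lambda>n. \<sigma> n \<in> Car \<and> dd (\<sigma> n) (rep f) < \<epsilon>) sequentially"
        by (rule eventually_mono) (use rs eqn in auto)
    qed
    then show "\<exists>x. limitin mtopology \<sigma> x sequentially" by blast
  qed
qed

definition "Bn (n::nat) = {x \<in> Car. AE t in M. cmod (x t) \<le> real n * u t}"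

lemma Bn_closed: "closedin (Metric_space.mtopology Car dd) (Bn n)"
proof -
  interpret Metric_space Car dd by (rule ms)
  show ?thesis unfolding metric_closedin_iff_sequentially_closed
  proof (intro conjI allI impI)
    show "Bn n \<subseteq> Car" unfolding Bn_def by auto
    fix \<sigma> l assume H: "range \<sigma> \<subseteq> Bn n \<and> limitin mtopology \<sigma> l sequentially"
    hence lC: "l \<in> Car" and ev: "\<And>\<epsilon>. \<epsilon> > 0 \<Longrightarrow> eventually (\<lambda>k. \<sigma> k \<in> Car \<and> dd (\<sigma> k) l < \<epsilon>) sequentially"
      unfolding limitin_metric by auto
    have sB: "\<sigma> k \<in> Bn n" for k using H by auto
    have sD: "\<sigma> k \<in> Da" for k using sB Car_Da unfolding Bn_def by auto
    have lD: "l \<in> Da" using lC Car_Da by auto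
    have L2d: "(\<lambda>t. \<sigma> k t - l t) \<in> L2 M" for k using Da_L2 Da_diff sD lD by blast
    have "(\<lambda>k. l2_norm M (\<lambda>t. \<sigma> k t - l t)) \<longlonglongrightarrow> 0"
    proof (rule order_tendstoI)
      fix e :: real assume "0 > e"
      then show "eventually (\<lambda>k. e < l2_norm M (\<lambda>t. \<sigma> k t - l t)) sequentially"
        using l2_norm_nonneg by (auto intro: always_eventually less_le_trans)
    next
      fix e :: real assume "0 < e"
      then show "eventually (\<lambda>k. l2_norm M (\<lambda>t. \<sigma> k t - l t) < e) sequentially"
      proof (rule eventually_mono[OF ev])
        fix k assume a: "\<sigma> k \<in> Car \<and> dd (\<sigma> k) l < e"
        have "dd (\<sigma> k) l = fn (\<lambda>t. \<sigma> k t - l t)" unfolding dd_def using sD lD by simp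
        then show "l2_norm M (\<lambda>t. \<sigma> k t - l t) < e"
          using a fn_ge[OF Da_diff[OF sD[of k] lD]] by linarith
      qed
    qed
    hence "(\<lambda>k. (l2_norm M (\<lambda>t. \<sigma> k t - l t))^2) \<longlonglongrightarrow> 0"
      using tendsto_power[of _ 0 sequentially 2] by simp
    hence lim: "(\<lambda>k. LINT t|M. norm ((cmod (\<sigma> k t - l t))^2)) \<longlonglongrightarrow> 0"
      unfolding l2_norm_sq by simp
    obtain r :: "nat \<Rightarrow> nat" where r: "strict_mono r"
      "AE t in M. (\<lambda>k. (cmod (\<sigma> (r k) t - l t))^2) \<longlonglongrightarrow> 0"
      using tendsto_L1_AE_subseq[of M "\<lambda>k t. (cmod (\<sigma> k t - l t))^2", OF L2_int[OF L2d] lim] by blast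
    have "AE t in M. \<forall>k. cmod (\<sigma> k t) \<le> real n * u t"
      unfolding AE_all_countable using sB unfolding Bn_def by auto
    then have "AE t in M. cmod (l t) \<le> real n * u t"
      using r(2)
    proof (eventually_elim)
      case (elim t)
      have "(\<lambda>k. sqrt ((cmod (\<sigma> (r k) t - l t))^2)) \<longlonglongrightarrow> sqrt 0"
        by (rule tendsto_real_sqrt[OF elim(2)])
      hence "(\<lambda>k. cmod (\<sigma> (r k) t - l t)) \<longlonglongrightarrow> 0" by simp
      hence "(\<lambda>k. \<sigma> (r k) t - l t) \<longlonglongrightarrow> 0" by (simp only: tendsto_norm_zero_iff)
      hence "(\<lambda>k. \<sigma> (r k) t) \<longlonglongrightarrow> l t" by (rule LIM_zero_cancel)
      hence "(\<lambda>k. cmod (\<sigma> (r k) t)) \<longlonglongrightarrow> cmod (l t)" by (rule tendsto_norm)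
      then show ?case using elim(1) by (intro LIMSEQ_le_const2) auto
    qed
    then show "l \<in> Bn n" using lC unfolding Bn_def by auto
  qed
qed

lemma Car_nonempty: "rep (\<lambda>x. 0) \<in> Car" unfolding Car_def using Da_zero by auto

lemma Bn_union: "(\<Union>n. Bn n) = Car"
proof
  show "(\<Union>n. Bn n) \<subseteq> Car" unfolding Bn_def by auto
  show "Car \<subseteq> (\<Union>n. Bn n)"
  proof
    fix x assume xC: "x \<in> Car"
    hence "x \<in> principal_ideal M u" using Car_Da DaE by auto
    then obtain c where c: "c \<ge> 0" "AE t in M. cmod (x t) \<le> c * u t"
      unfolding principal_ideal_def by auto
    define n where "n = nat \<lceil>c\<rceil>"
    have cn: "c \<le> real n" unfolding n_def by linarith
    have "AE t in M. cmod (x t) \<le> real n * u t"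
      using c(2) upos
    proof (eventually_elim)
      case (elim t)
      have "c * u t \<le> real n * u t" using cn elim(2) by (simp add: mult_right_mono)
      then show ?case using elim(1) by linarith
    qed
    then show "x \<in> (\<Union>n. Bn n)" using xC unfolding Bn_def by auto
  qed
qed

lemma embed_const: "\<exists>K\<ge>0. \<forall>f\<in>Da. AE t in M. cmod (f t) \<le> K * fn f * u t"
proof -
  interpret Metric_space Car dd by (rule ms)
  have "\<exists>n. mtopology interior_of (Bn n) \<noteq> {}"
  proof (rule ccontr)
    assume nH: "\<not> (\<exists>n. mtopology interior_of (Bn n) \<noteq> {})"
    have H: "closedin mtopology T \<and> mtopology interior_of T = {}" if T: "T \<in> range Bn" for T
    proof -
      obtain n where "T = Bn n" using T by blast
      then show ?thesis using Bn_closed[of n] nH by simp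
    qed
    have cnt: "countable (range Bn)" by simp
    have "mtopology interior_of \<Union>(range Bn) = {}"
      by (rule metric_Baire_category_alt[OF Car_mcomplete cnt]) (rule H)
    hence "mtopology interior_of Car = {}" using Bn_union by simp
    moreover have "mtopology interior_of Car = Car"
      using interior_of_topspace[of mtopology] by simp
    ultimately show False using Car_nonempty by simp
  qed
  then obtain n f0 where f0: "f0 \<in> mtopology interior_of (Bn n)" by blast
  have op: "openin mtopology (mtopology interior_of (Bn n))" by simp
  have "\<exists>r>0. mball f0 r \<subseteq> mtopology interior_of (Bn n)"
    using op f0 unfolding openin_mtopology by blast
  then obtain r where r: "r > 0" "mball f0 r \<subseteq> mtopology interior_of (Bn n)" by blast
  have f0B: "f0 \<in> Bn n" using f0 interior_of_subset[of mtopology "Bn n"] by blast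
  hence f0C: "f0 \<in> Car" and f0b: "AE t in M. cmod (f0 t) \<le> real n * u t"
    unfolding Bn_def by auto
  have f0D: "f0 \<in> Da" using Car_Da f0C by blast
  have small: "AE t in M. cmod (h t) \<le> 2 * real n * u t" if hD: "h \<in> Da" and hs: "fn h < r" for h
  proof -
    define x where "x = rep (\<lambda>t. f0 t + h t)"
    have sD: "(\<lambda>t. f0 t + h t) \<in> Da" using Da_add f0D hD by blast
    have xC: "x \<in> Car" unfolding x_def Car_def using sD by auto
    have xae: "ae_eq M x (\<lambda>t. f0 t + h t)" unfolding x_def using rep[OF sD] by simp
    have xD: "x \<in> Da" using rep[OF sD] unfolding x_def by simp
    have "dd f0 x = fn (\<lambda>t. f0 t - x t)" unfolding dd_def using f0D xD by simp
    also have "\<dots> = fn (\<lambda>t. f0 t - (f0 t + h t))"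
    proof (rule fn_ae[OF Da_diff[OF f0D xD] Da_diff[OF f0D sD]])
      show "ae_eq M (\<lambda>t. f0 t - x t) (\<lambda>t. f0 t - (f0 t + h t))"
        using xae unfolding ae_eq_def by (rule eventually_mono) simp
    qed
    also have "(\<lambda>t. f0 t - (f0 t + h t)) = (\<lambda>t. (-1) * h t)" by auto
    also have "fn (\<lambda>t. (-1) * h t) = fn h" using fn_scale[OF hD, of "-1"] by simp
    finally have "dd f0 x < r" using hs by simp
    hence "x \<in> mball f0 r" using f0C xC by simp
    hence "x \<in> Bn n" using r(2) interior_of_subset[of mtopology "Bn n"] by blast
    hence "AE t in M. cmod (x t) \<le> real n * u t" unfolding Bn_def by auto
    then show ?thesis using f0b xae unfolding ae_eq_def
    proof (eventually_elim)
      case (elim t)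
      have "h t = x t - f0 t" using elim(3) by simp
      hence "cmod (h t) \<le> cmod (x t) + cmod (f0 t)" using norm_triangle_ineq4 by simp
      then show ?case using elim(1,2) by linarith
    qed
  qed
  define K where "K = 4 * real n / r"
  have K0: "K \<ge> 0" unfolding K_def using r by simp
  have "AE t in M. cmod (f t) \<le> K * fn f * u t" if fD: "f \<in> Da" for f
  proof (cases "fn f = 0")
    case True
    then show ?thesis using fn_zero_ae[OF fD] by (auto elim: eventually_mono)
  next
    case False
    hence fpos: "fn f > 0" using fn_nonneg[OF fD] by simp
    define s where "s = r / (2 * fn f)"
    have s0: "s > 0" unfolding s_def using r fpos by simp
    have hD: "(\<lambda>t. complex_of_real s * f t) \<in> Da" using Da_scale fD by blast
    have "fn (\<lambda>t. complex_of_real s * f t) = s * fn f" using fn_scale[OF fD] s0 by simp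
    also have "\<dots> = r / 2" unfolding s_def using fpos by simp
    finally have "fn (\<lambda>t. complex_of_real s * f t) < r" using r by simp
    from small[OF hD this] show ?thesis
    proof (eventually_elim)
      case (elim t)
      hence "s * cmod (f t) \<le> 2 * real n * u t" using s0 by (simp add: norm_mult)
      hence "cmod (f t) \<le> 2 * real n * u t / s" using s0 by (simp add: field_simps)
      also have "2 * real n * u t / s = K * fn f * u t"
        unfolding s_def K_def using fpos r by (simp add: field_simps)
      finally show ?case .
    qed
  qed
  then show ?thesis using K0 by blast
qed

end



lemma inner_le_I:
  assumes "f \<in> L2 M" "g \<in> L2 M"
  shows "Re (l2_inner M f g) \<le> (LINT x|M. cmod (f x) * cmod (g x))"
proof -
  have "Re (l2_inner M f g) \<le> cmod (l2_inner M f g)" by (rule complex_Re_le_cmod)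
  also have "\<dots> \<le> (LINT x|M. cmod (f x * cnj (g x)))"
    unfolding l2_inner_def by (rule Bochner_Integration.integral_norm_bound)
  also have "\<dots> = (LINT x|M. cmod (f x) * cmod (g x))" by (simp add: norm_mult)
  finally show ?thesis .
qed

lemma I_amgm:
  assumes "f \<in> L2 M" "g \<in> L2 M"
  shows "(LINT x|M. cmod (f x) * cmod (g x)) \<le> ((l2_norm M f)^2 + (l2_norm M g)^2) / 2"
proof -
  have "(LINT x|M. cmod (f x) * cmod (g x)) \<le> (LINT x|M. ((cmod (f x))^2 + (cmod (g x))^2) / 2)"
  proof (rule integral_mono)
    show "integrable M (\<lambda>x. cmod (f x) * cmod (g x))" by (rule L2_prod_int_real[OF assms])
    show "integrable M (\<lambda>x. ((cmod (f x))^2 + (cmod (g x))^2) / 2)"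
      using Bochner_Integration.integrable_add[OF L2_int[OF assms(1)] L2_int[OF assms(2)]] by simp
    show "cmod (f x) * cmod (g x) \<le> ((cmod (f x))^2 + (cmod (g x))^2) / 2" for x
      using sq_ineq1[of "cmod (f x)" "cmod (g x)"] by simp
  qed
  also have "\<dots> = ((l2_norm M f)^2 + (l2_norm M g)^2) / 2"
    unfolding l2_norm_sq using L2_int[OF assms(1)] L2_int[OF assms(2)] by simp
  finally show ?thesis .
qed

context prop43 begin

abbreviation "R \<equiv> resolvent M D A (complex_of_real mu)"

lemma R: assumes "g \<in> L2 M"
  shows "R g \<in> D \<and> ae_eq M (\<lambda>x. complex_of_real mu * R g x - A (R g) x) g"
proof -
  have "\<exists>f. f \<in> D \<and> ae_eq M (\<lambda>x. complex_of_real mu * f x - A f x) g"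
    using mures assms unfolding resolvent_set_def by blast
  then show ?thesis unfolding resolvent_def by (rule someI_ex)
qed

lemma R_D: "g \<in> L2 M \<Longrightarrow> R g \<in> D" using R by blast
lemma R_L2: "g \<in> L2 M \<Longrightarrow> R g \<in> L2 M" using R_D D_L2 by blast
lemma AR_L2: "g \<in> L2 M \<Longrightarrow> A (R g) \<in> L2 M" using R_D A_L2 by blast

definition "C1 = max 0 (SOME C. \<forall>f\<in>D. l2_norm M f \<le> C * l2_norm M (\<lambda>x. complex_of_real mu * f x - A f x))"

lemma C1: "C1 \<ge> 0" "f \<in> D \<Longrightarrow> l2_norm M f \<le> C1 * l2_norm M (\<lambda>x. complex_of_real mu * f x - A f x)"
proof -
  have "\<exists>C. \<forall>f\<in>D. l2_norm M f \<le> C * l2_norm M (\<lambda>x. complex_of_real mu * f x - A f x)"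
    using mures unfolding resolvent_set_def by blast
  hence H: "\<forall>f\<in>D. l2_norm M f \<le> (SOME C. \<forall>f\<in>D. l2_norm M f \<le> C * l2_norm M (\<lambda>x. complex_of_real mu * f x - A f x)) * l2_norm M (\<lambda>x. complex_of_real mu * f x - A f x)"
    by (rule someI_ex)
  show "C1 \<ge> 0" unfolding C1_def by simp
  assume "f \<in> D"
  then show "l2_norm M f \<le> C1 * l2_norm M (\<lambda>x. complex_of_real mu * f x - A f x)"
    using H l2_norm_nonneg[of M "\<lambda>x. complex_of_real mu * f x - A f x"] unfolding C1_def
    by (meson max.cobounded2 mult_right_mono order_trans)
qed

lemma R_bound: assumes "g \<in> L2 M" shows "l2_norm M (R g) \<le> C1 * l2_norm M g"
proof -
  have "l2_norm M (\<lambda>x. complex_of_real mu * R g x - A (R g) x) = l2_norm M g"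
    using R[OF assms] L2_diff[OF L2_scale[OF R_L2[OF assms]] AR_L2[OF assms]] assms
    by (intro l2_norm_ae) auto
  then show ?thesis using C1(2)[OF R_D[OF assms]] by simp
qed

lemma AR_ae: assumes "g \<in> L2 M" shows "ae_eq M (A (R g)) (\<lambda>x. complex_of_real mu * R g x - g x)"
proof -
  have "AE x in M. complex_of_real mu * R g x - A (R g) x = g x" using R[OF assms] unfolding ae_eq_def by simp
  then show ?thesis unfolding ae_eq_def
  proof (rule eventually_mono)
    fix x assume e: "complex_of_real mu * R g x - A (R g) x = g x"
    show "A (R g) x = complex_of_real mu * R g x - g x" unfolding e[symmetric] by simp
  qed
qed

lemma inner_AR:
  assumes "g \<in> L2 M" "h \<in> L2 M"
  shows "l2_inner M (A (R g)) h = complex_of_real mu * l2_inner M (R g) h - l2_inner M g h"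
proof -
  have L: "(\<lambda>x. complex_of_real mu * R g x - g x) \<in> L2 M"
    using L2_diff[OF L2_scale[OF R_L2[OF assms(1)]] assms(1)] .
  have "l2_inner M (A (R g)) h = l2_inner M (\<lambda>x. complex_of_real mu * R g x - g x) h"
    by (rule l2_inner_ae_left[OF AR_L2[OF assms(1)] L assms(2) AR_ae[OF assms(1)]])
  also have "(\<lambda>x. complex_of_real mu * R g x - g x) = (\<lambda>x. complex_of_real mu * R g x + (-1) * g x)" by simp
  also have "l2_inner M \<dots> h = l2_inner M (\<lambda>x. complex_of_real mu * R g x) h + l2_inner M (\<lambda>x. (-1) * g x) h"
    by (rule l2_inner_add_left[OF L2_scale[OF R_L2[OF assms(1)]] L2_scale[OF assms(1)] assms(2)])
  also have "\<dots> = complex_of_real mu * l2_inner M (R g) h - l2_inner M g h"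
    unfolding l2_inner_scale_left by simp
  finally show ?thesis .
qed

definition "P g = (SOME f'. f' \<in> Da \<and> ae_eq M f' (R g) \<and>
   (\<forall>h\<in>Da. a f' h = l2_inner M g h - complex_of_real mu * l2_inner M (R g) h))"

lemma P: assumes "g \<in> L2 M"
  shows "P g \<in> Da \<and> ae_eq M (P g) (R g) \<and>
   (\<forall>h\<in>Da. a (P g) h = l2_inner M g h - complex_of_real mu * l2_inner M (R g) h)"
proof -
  have "\<exists>f'\<in>D. ae_eq M f' (R g) \<and> ae_eq M (A f') (A (R g))"
    using R_D[OF assms] ae_eq_refl by blast
  hence "\<exists>f'\<in>Da. ae_eq M f' (R g) \<and> (\<forall>h\<in>Da. a f' h = - l2_inner M (A (R g)) h)"
    using asc R_L2[OF assms] AR_L2[OF assms] unfolding associated_def by blast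
  then obtain f' where f': "f' \<in> Da" "ae_eq M f' (R g)" "\<forall>h\<in>Da. a f' h = - l2_inner M (A (R g)) h"
    by blast
  have "\<forall>h\<in>Da. a f' h = l2_inner M g h - complex_of_real mu * l2_inner M (R g) h"
    using f'(3) inner_AR[OF assms] Da_L2 by simp
  hence "\<exists>f'. f' \<in> Da \<and> ae_eq M f' (R g) \<and>
   (\<forall>h\<in>Da. a f' h = l2_inner M g h - complex_of_real mu * l2_inner M (R g) h)"
    using f' by blast
  then show ?thesis unfolding P_def by (rule someI_ex)
qed

lemma P_Da: "g \<in> L2 M \<Longrightarrow> P g \<in> Da" using P by blast
lemma P_ae: "g \<in> L2 M \<Longrightarrow> ae_eq M (P g) (R g)" using P by blast
lemma P_a: "g \<in> L2 M \<Longrightarrow> h \<in> Da \<Longrightarrow> a (P g) h = l2_inner M g h - complex_of_real mu * l2_inner M (R g) h"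
  using P by blast

lemma inner_P_right: "g \<in> L2 M \<Longrightarrow> f \<in> L2 M \<Longrightarrow> l2_inner M f (P g) = l2_inner M f (R g)"
  by (rule l2_inner_ae_right[OF Da_L2[OF P_Da] R_L2 _ P_ae])

lemma R_sym:
  assumes g: "g \<in> L2 M" and h: "h \<in> L2 M"
  shows "l2_inner M g (R h) = l2_inner M (R g) h"
proof -
  have 1: "a (P g) (P h) = l2_inner M g (R h) - complex_of_real mu * l2_inner M (R g) (R h)"
    using P_a[OF g P_Da[OF h]] inner_P_right[OF h g] inner_P_right[OF h R_L2[OF g]] by simp
  have 2: "a (P h) (P g) = l2_inner M h (R g) - complex_of_real mu * l2_inner M (R h) (R g)"
    using P_a[OF h P_Da[OF g]] inner_P_right[OF g h] inner_P_right[OF g R_L2[OF h]] by simp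
  have "a (P g) (P h) = cnj (a (P h) (P g))" by (rule a_herm[OF P_Da[OF g] P_Da[OF h]])
  also have "\<dots> = l2_inner M (R g) h - complex_of_real mu * l2_inner M (R g) (R h)"
    unfolding 2 using l2_inner_cnj[of M h "R g"] l2_inner_cnj[of M "R h" "R g"] by simp
  finally show ?thesis using 1 by simp
qed

lemma fnP_sq:
  assumes g: "g \<in> L2 M"
  shows "(fn (P g))^2 = Re (l2_inner M g (R g)) + (w0 + 1 - mu) * (l2_norm M (R g))^2"
proof -
  have "(fn (P g))^2 = Re (B (P g) (P g))"
    unfolding fn_B using B_pos[OF P_Da[OF g]] by simp
  also have "\<dots> = Re (a (P g) (P g)) + (w0 + 1) * (l2_norm M (P g))^2" by (rule ReB)
  also have "l2_norm M (P g) = l2_norm M (R g)"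
    using l2_norm_ae Da_L2 P_Da P_ae R_L2 g by blast
  also have "a (P g) (P g) = l2_inner M g (R g) - complex_of_real mu * l2_inner M (R g) (R g)"
    using P_a[OF g P_Da[OF g]] inner_P_right[OF g g] inner_P_right[OF g R_L2[OF g]] by simp
  finally show ?thesis unfolding l2_inner_self by (simp add: algebra_simps)
qed

end



context prop43 begin

definition "Kc = (SOME K. K \<ge> 0 \<and> (\<forall>f\<in>Da. AE t in M. cmod (f t) \<le> K * fn f * u t))"

lemma Kc: "Kc \<ge> 0" "f \<in> Da \<Longrightarrow> AE t in M. cmod (f t) \<le> Kc * fn f * u t"
proof -
  have "Kc \<ge> 0 \<and> (\<forall>f\<in>Da. AE t in M. cmod (f t) \<le> Kc * fn f * u t)"
    unfolding Kc_def using embed_const by (rule someI_ex)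
  then show "Kc \<ge> 0" "f \<in> Da \<Longrightarrow> AE t in M. cmod (f t) \<le> Kc * fn f * u t" by auto
qed

definition "Nn h = (LINT x|M. cmod (complex_of_real (u x)) * cmod (h x))"

lemma Nn_nonneg: "0 \<le> Nn h" unfolding Nn_def by (rule integral_nonneg_AE) simp

lemma u_ae: "AE x in M. cmod (complex_of_real (u x)) = u x"
  using upos by (rule eventually_mono) simp

lemma R_ptwise:
  assumes g: "g \<in> L2 M"
  shows "AE t in M. cmod (R g t) \<le> Kc * fn (P g) * u t"
  using Kc(2)[OF P_Da[OF g]] P_ae[OF g] unfolding ae_eq_def
  by (rule eventually_elim2) simp

lemma I_bound:
  assumes g: "g \<in> L2 M" and h: "h \<in> L2 M"
  shows "(LINT x|M. cmod (h x) * cmod (R g x)) \<le> Kc * fn (P g) * Nn h"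
proof -
  have "(LINT x|M. cmod (h x) * cmod (R g x)) \<le>
        (LINT x|M. (Kc * fn (P g)) * (cmod (complex_of_real (u x)) * cmod (h x)))"
  proof (rule integral_mono_AE)
    show "integrable M (\<lambda>x. cmod (h x) * cmod (R g x))" by (rule L2_prod_int_real[OF h R_L2[OF g]])
    show "integrable M (\<lambda>x. (Kc * fn (P g)) * (cmod (complex_of_real (u x)) * cmod (h x)))"
      by (rule integrable_mult_right[OF L2_prod_int_real[OF uL2 h]])
    show "AE x in M. cmod (h x) * cmod (R g x) \<le> (Kc * fn (P g)) * (cmod (complex_of_real (u x)) * cmod (h x))"
      using R_ptwise[OF g] u_ae
    proof (eventually_elim)
      case (elim x)
      have "cmod (h x) * cmod (R g x) \<le> cmod (h x) * (Kc * fn (P g) * u x)"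
        using elim(1) by (simp add: mult_left_mono)
      then show ?case using elim(2) by (simp add: mult_ac)
    qed
  qed
  also have "\<dots> = Kc * fn (P g) * Nn h" unfolding Nn_def by simp
  finally show ?thesis .
qed

definition "c1 = \<bar>w0 + 1 - mu\<bar>"
definition "C2 = sqrt ((1 + C1^2) / 2 + c1 * C1^2)"
definition "C3 = Kc + sqrt c1 * Kc * C2"

lemma c1_nonneg: "0 \<le> c1" unfolding c1_def by simp
lemma C2_nonneg: "0 \<le> C2" unfolding C2_def using c1_nonneg by simp
lemma C3_nonneg: "0 \<le> C3" unfolding C3_def using c1_nonneg C2_nonneg Kc(1) by simp

lemma fnP_le:
  assumes g: "g \<in> L2 M"
  shows "(fn (P g))^2 \<le> (LINT x|M. cmod (g x) * cmod (R g x)) + c1 * (l2_norm M (R g))^2"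
proof -
  have "(w0 + 1 - mu) * (l2_norm M (R g))^2 \<le> c1 * (l2_norm M (R g))^2"
    unfolding c1_def by (rule mult_right_mono) simp_all
  then show ?thesis unfolding fnP_sq[OF g] using inner_le_I[OF g R_L2[OF g]] by linarith
qed

lemma stepA:
  assumes f: "f \<in> L2 M"
  shows "fn (P f) \<le> C2 * l2_norm M f"
proof -
  have Rb: "(l2_norm M (R f))^2 \<le> C1^2 * (l2_norm M f)^2"
  proof -
    have "(l2_norm M (R f))^2 \<le> (C1 * l2_norm M f)^2"
      by (rule power_mono[OF R_bound[OF f] l2_norm_nonneg])
    then show ?thesis by (simp add: power_mult_distrib)
  qed
  have "(fn (P f))^2 \<le> (LINT x|M. cmod (f x) * cmod (R f x)) + c1 * (l2_norm M (R f))^2"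
    by (rule fnP_le[OF f])
  also have "\<dots> \<le> ((l2_norm M f)^2 + (l2_norm M (R f))^2) / 2 + c1 * (l2_norm M (R f))^2"
    using I_amgm[OF f R_L2[OF f]] by simp
  also have "\<dots> \<le> ((l2_norm M f)^2 + C1^2 * (l2_norm M f)^2) / 2 + c1 * (C1^2 * (l2_norm M f)^2)"
    using Rb c1_nonneg by (intro add_mono divide_right_mono mult_left_mono) simp_all
  also have "\<dots> = ((1 + C1^2) / 2 + c1 * C1^2) * (l2_norm M f)^2" by (simp add: algebra_simps)
  finally have "fn (P f) \<le> sqrt (((1 + C1^2) / 2 + c1 * C1^2) * (l2_norm M f)^2)"
    by (rule real_le_rsqrt)
  also have "\<dots> = C2 * l2_norm M f"
    unfolding C2_def real_sqrt_mult using l2_norm_nonneg[of M f] by simp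
  finally show ?thesis .
qed

lemma stepB:
  assumes g: "g \<in> L2 M"
  shows "l2_norm M (R g) \<le> Kc * C2 * Nn g"
proof (rule quad_bound[where \<beta>=0, simplified])
  show "0 \<le> l2_norm M (R g)" by (rule l2_norm_nonneg)
  show "0 \<le> Kc * C2 * Nn g" using Kc(1) C2_nonneg Nn_nonneg by simp
  have Rg: "R g \<in> L2 M" by (rule R_L2[OF g])
  have "(l2_norm M (R g))^2 = Re (l2_inner M (R g) (R g))" unfolding l2_inner_self by simp
  also have "\<dots> = Re (l2_inner M g (R (R g)))" using R_sym[OF g Rg] by simp
  also have "\<dots> \<le> (LINT x|M. cmod (g x) * cmod (R (R g) x))" by (rule inner_le_I[OF g R_L2[OF Rg]])
  also have "\<dots> \<le> Kc * fn (P (R g)) * Nn g" by (rule I_bound[OF Rg g])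
  also have "\<dots> \<le> Kc * (C2 * l2_norm M (R g)) * Nn g"
    using stepA[OF Rg] Kc(1) Nn_nonneg by (intro mult_right_mono mult_left_mono) simp_all
  also have "\<dots> = Kc * C2 * Nn g * l2_norm M (R g)" by (simp add: mult_ac)
  finally show "(l2_norm M (R g))^2 \<le> Kc * C2 * Nn g * l2_norm M (R g)" .
qed

lemma stepC:
  assumes g: "g \<in> L2 M"
  shows "fn (P g) \<le> C3 * Nn g"
proof -
  have "(fn (P g))^2 \<le> (LINT x|M. cmod (g x) * cmod (R g x)) + c1 * (l2_norm M (R g))^2"
    by (rule fnP_le[OF g])
  also have "\<dots> \<le> Kc * fn (P g) * Nn g + c1 * (Kc * C2 * Nn g)^2"
    by (rule add_mono[OF I_bound[OF g g] mult_left_mono[OF power_mono[OF stepB[OF g] l2_norm_nonneg] c1_nonneg]])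
  also have "\<dots> = (Kc * Nn g) * fn (P g) + (sqrt c1 * Kc * C2 * Nn g)^2"
    using c1_nonneg by (simp add: power_mult_distrib mult_ac)
  finally have q: "(fn (P g))^2 \<le> (Kc * Nn g) * fn (P g) + (sqrt c1 * Kc * C2 * Nn g)^2" .
  have n1: "0 \<le> Kc * Nn g" using Kc(1) Nn_nonneg by simp
  have n2: "0 \<le> sqrt c1 * Kc * C2 * Nn g" using Kc(1) Nn_nonneg c1_nonneg C2_nonneg by simp
  have "fn (P g) \<le> Kc * Nn g + sqrt c1 * Kc * C2 * Nn g"
    by (rule quad_bound[OF fn_nonneg[OF P_Da[OF g]] n1 n2 q])
  then show ?thesis unfolding C3_def by (simp add: algebra_simps)
qed

lemma stepD:
  assumes g: "g \<in> L2 M"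
  shows "AE t in M. cmod (R g t) \<le> Kc * C3 * Nn g * u t"
  using R_ptwise[OF g] upos
proof (eventually_elim)
  case (elim t)
  have "Kc * fn (P g) * u t \<le> Kc * (C3 * Nn g) * u t"
    using stepC[OF g] Kc(1) elim(2) by (intro mult_right_mono mult_left_mono) simp_all
  then show ?case using elim(1) by (simp add: mult_ac)
qed

end



context prop43 begin

lemma R_real:
  assumes g: "g \<in> L2 M" and gr: "real_fun M g"
  shows "AE t in M. Im (R g t) = 0"
proof -
  let ?f = "R g"
  have fD: "?f \<in> D" by (rule R_D[OF g])
  obtain g1 g2 where g1: "g1 \<in> D" and g2: "g2 \<in> D" and r1: "real_fun M g1" and r2: "real_fun M g2"
    and fe: "ae_eq M ?f (\<lambda>x. g1 x + \<i> * g2 x)"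
    using ro fD unfolding real_operator_def by blast
  have Ar1: "real_fun M (A g1)" and Ar2: "real_fun M (A g2)"
    using ro g1 g2 r1 r2 unfolding real_operator_def by blast+
  define ig2 where "ig2 = (\<lambda>x. \<i> * g2 x)"
  have ig2D: "ig2 \<in> D" unfolding ig2_def by (rule D_scale[OF g2])
  define h where "h = (\<lambda>x. g1 x + ig2 x)"
  have hD: "h \<in> D" unfolding h_def by (rule D_add[OF g1 ig2D])
  have e1: "ae_eq M (A ?f) (A h)" using A_ae[OF fD hD] fe unfolding h_def ig2_def by simp
  have e2: "ae_eq M (A h) (\<lambda>x. A g1 x + A ig2 x)" unfolding h_def by (rule A_add[OF g1 ig2D])
  have e3: "ae_eq M (A ig2) (\<lambda>x. \<i> * A g2 x)" unfolding ig2_def by (rule A_scale[OF g2])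
  have e4: "ae_eq M (\<lambda>x. complex_of_real mu * ?f x - A ?f x) g" using R[OF g] by simp
  have z: "AE x in M. complex_of_real mu * g2 x - A g2 x = 0"
    using fe e1 e2 e3 e4 r1 r2 Ar1 Ar2 gr unfolding ae_eq_def real_fun_def
  proof (eventually_elim)
    case (elim x)
    have "A ?f x = A g1 x + \<i> * A g2 x" using elim(2,3,4) by simp
    hence "complex_of_real mu * (g1 x + \<i> * g2 x) - (A g1 x + \<i> * A g2 x) = g x"
      using elim(1,5) by simp
    hence "Im (complex_of_real mu * (g1 x + \<i> * g2 x) - (A g1 x + \<i> * A g2 x)) = 0"
      using elim(10) by simp
    then show ?case using elim(6,7,8,9) by (simp add: complex_eq_iff)
  qed
  have g2L: "g2 \<in> L2 M" by (rule D_L2[OF g2])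
  have dL: "(\<lambda>x. complex_of_real mu * g2 x - A g2 x) \<in> L2 M"
    by (rule L2_diff[OF L2_scale[OF g2L] A_L2[OF g2]])
  have "l2_norm M g2 \<le> C1 * l2_norm M (\<lambda>x. complex_of_real mu * g2 x - A g2 x)"
    by (rule C1(2)[OF g2])
  also have "l2_norm M (\<lambda>x. complex_of_real mu * g2 x - A g2 x) = 0"
    by (rule l2_norm_ae_zero[OF dL z])
  finally have "l2_norm M g2 = 0" using l2_norm_nonneg[of M g2] by simp
  hence "AE x in M. g2 x = 0" by (rule l2_norm_zero_ae[OF g2L])
  then show ?thesis using fe r1 unfolding ae_eq_def real_fun_def
    by eventually_elim simp
qed

lemma U_meas: "(\<lambda>x. complex_of_real (u x)) \<in> borel_measurable M"
  using uL2 by (rule L2_meas)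

lemma rank_one_nonneg:
  assumes f: "f \<in> L2 M" and fn: "nonneg_fun M f"
  shows "rank_one M u f x = complex_of_real (Nn f * u x)"
proof -
  have "(LINT y|M. complex_of_real (u y) * f y) = (LINT y|M. complex_of_real (cmod (complex_of_real (u y)) * cmod (f y)))"
  proof (rule integral_cong_AE)
    show "(\<lambda>y. complex_of_real (u y) * f y) \<in> borel_measurable M" using U_meas f by measurable
    show "(\<lambda>y. complex_of_real (cmod (complex_of_real (u y)) * cmod (f y))) \<in> borel_measurable M"
      using U_meas f by measurable
    show "AE y in M. complex_of_real (u y) * f y = complex_of_real (cmod (complex_of_real (u y)) * cmod (f y))"
      using upos fn unfolding nonneg_fun_def
    proof (eventually_elim)
      case (elim y)
      have "f y = complex_of_real (Re (f y))" using elim(2) by (simp add: complex_eq_iff)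
      moreover have "cmod (f y) = Re (f y)" using elim(2) by (simp add: cmod_def)
      ultimately show ?case using elim(1) by (simp add: complex_eq_iff)
    qed
  qed
  also have "\<dots> = complex_of_real (Nn f)" unfolding Nn_def by (rule integral_complex_of_real)
  finally show ?thesis unfolding rank_one_def by simp
qed

lemma main_bound:
  assumes f: "f \<in> L2 M" and fn: "nonneg_fun M f"
  shows "AE x in M. Im (R f x) = 0 \<and> cmod (R f x) \<le> Kc * C3 * Nn f * u x \<and> 0 < u x"
proof -
  have rf: "real_fun M f" using fn unfolding nonneg_fun_def real_fun_def by (auto elim: eventually_mono)
  show ?thesis using R_real[OF f rf] stepD[OF f] upos by eventually_elim simp
qed

lemma final:
  "op_dom_le M (\<lambda>f x. - rank_one M u f x) R \<and> op_dom_le M R (rank_one M u)"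
proof
  define KK where "KK = Kc * C3"
  have KK0: "0 \<le> KK" unfolding KK_def using Kc(1) C3_nonneg by simp
  show "op_dom_le M (\<lambda>f x. - rank_one M u f x) R"
    unfolding op_dom_le_def
  proof (intro exI conjI ballI impI)
    show "0 < complex_of_real (KK + 1)" using KK0 by (simp add: less_complex_def)
    fix f assume f: "f \<in> L2 M" and fn: "nonneg_fun M f"
    show "nonneg_fun M (\<lambda>x. R f x - complex_of_real (KK + 1) * (- rank_one M u f x))"
      unfolding nonneg_fun_def rank_one_nonneg[OF f fn]
      using main_bound[OF f fn]
    proof (eventually_elim)
      case (elim x)
      have N0: "0 \<le> Nn f * u x" using Nn_nonneg elim by simp
      have "- Re (R f x) \<le> cmod (R f x)" using abs_Re_le_cmod[of "R f x"] by linarith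
      hence "- Re (R f x) \<le> KK * (Nn f * u x)" using elim unfolding KK_def by (simp add: mult_ac)
      hence "0 \<le> Re (R f x) + (KK + 1) * (Nn f * u x)" using N0 by (simp add: algebra_simps)
      then show ?case using elim by simp
    qed
  qed
  show "op_dom_le M R (rank_one M u)"
    unfolding op_dom_le_def
  proof (intro exI conjI ballI impI)
    show "0 < complex_of_real (1 / (KK + 1))" using KK0 by (simp add: less_complex_def)
    fix f assume f: "f \<in> L2 M" and fn: "nonneg_fun M f"
    show "nonneg_fun M (\<lambda>x. rank_one M u f x - complex_of_real (1 / (KK + 1)) * R f x)"
      unfolding nonneg_fun_def rank_one_nonneg[OF f fn]
      using main_bound[OF f fn]
    proof (eventually_elim)
      case (elim x)
      have N0: "0 \<le> Nn f * u x" using Nn_nonneg elim by simp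
      have "Re (R f x) \<le> cmod (R f x)" by (rule complex_Re_le_cmod)
      hence "Re (R f x) \<le> KK * (Nn f * u x)" using elim unfolding KK_def by (simp add: mult_ac)
      also have "\<dots> \<le> (KK + 1) * (Nn f * u x)" using N0 by (simp add: algebra_simps)
      finally have "Re (R f x) / (KK + 1) \<le> Nn f * u x" using KK0 by (simp add: field_simps)
      then show ?case using elim by simp
    qed
  qed
qed

end


theorem proposition4p3:
  fixes M :: "'a measure" and D Da :: "('a \<Rightarrow> complex) set"
    and A :: "('a \<Rightarrow> complex) \<Rightarrow> ('a \<Rightarrow> complex)"
    and a :: "('a \<Rightarrow> complex) \<Rightarrow> ('a \<Rightarrow> complex) \<Rightarrow> complex"
    and u :: "'a \<Rightarrow> real" and \<mu> :: real
  assumes "sigma_finite_measure M"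
    and "self_adjoint M D A"
    and "real_operator M D A"
    and "spectral_bound M D A < \<infinity>"
    and "closed_form M Da a"
    and "associated M D A Da a"
    and "(\<lambda>x. complex_of_real (u x)) \<in> L2 M"
    and "AE x in M. 0 < u x"
    and "Da \<subseteq> principal_ideal M u"
    and "complex_of_real \<mu> \<in> resolvent_set M D A"
  shows "op_dom_le M (\<lambda>f x. - rank_one M u f x) (resolvent M D A (complex_of_real \<mu>))
       \<and> op_dom_le M (resolvent M D A (complex_of_real \<mu>)) (rank_one M u)"
proof -
  interpret prop43 M D Da A a u \<mu>
    using assms(2,3,5,6,7,8,9,10) by unfold_locales
  show ?thesis by (rule final)
qed

end
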